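(* Fix $\theta\in\Delta\cap\mathbb Q^d$ and $T\in\mathbb N^*(\theta)$, and let $B^*_s$, $B^*_{s,\lambda}$ be as defined in the context. (a) For each $s\ge1$, the family $\{B^*_{s,\lambda}\}_{\lambda\in\mathcal T_{(s-1)T}}$ is i.i.d. under $P^{\mathbf q}$. (b) For $s\ge1$ define $q^*_s\in\mathcal P(\mathbb N)$ by $q^*_s(k)=P^{\mathbf q}(|B^*_{s,\lambda}|=k)$ for $k\in\mathbb N$; by (a) this does not depend on $\lambda$. Then the sequence $(q^*_s)_{s\ge1}$ is i.i.d. under $P$.
   Context: Notation: $\mathbb N=\{0,1,\dots\}$, $\mathbb N^*=\{1,2,\dots\}$, $|\cdot|$ is the $\ell^1$ norm, and $\mathcal P(\mathbb N)$ is the set of probability measures on $\mathbb N$. Directions: $\Delta=\{\theta\in\mathbb R^d:|\theta|\le1\}$ and $\mathbb N^*(\theta)=\{t\in\mathbb N^*:t\theta\in\mathbb Z^d,\ t-t|\theta|\in2\mathbb N\}$. Environment. $\mathbf q=(q_{t,x})_{(t,x)\in\mathbb N\times\mathbb Z^d}$ with $q_{t,x}\in\mathcal P(\mathbb N)$, i.i.d. under $Q$, and $P=\int Q(d\mathbf q)P^{\mathbf q}$. Genealogies. $\mathcal T_t=\{\nu=(\nu_0,\dots,\nu_t)\in(\mathbb N^* )^{1+t}:\nu_0=1\}$, $\mathcal T=\bigcup_t\mathcal T_t$, and $\nu|_t=(\nu_0,\dots,\nu_t)$. Randomness. Under $P^{\mathbf q}$, the variables $X_{t,x,\nu}$ and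 $K_{t,x,\nu}$, $(t,x,\nu)\in\mathbb N\times\mathbb Z^d\times\mathcal T$, are all independent: $X_{t,x,\nu}$ is uniform on the $2d$ nearest neighbours of $x$, and $K_{t,x,\nu}$ has law $q_{t,x}$. Branches. For $(s,z,\lambda)\in\mathbb N\times\mathbb Z^d\times\mathcal T_s$, define $B^{s,z,\lambda}_0=\{(z,\lambda)\}$ and, for $t\ge1$, $$B^{s,z,\lambda}_t=\bigcup_{(x,\nu)\in B^{s,z,\lambda}_{t-1}}\{(y,\mu)\in\mathbb Z^d\times\mathcal T_{s+t}:X_{s+t-1,x,\nu}=y,\ \mu|_{s+t-1}=\nu,\ \mu_{s+t}\le K_{s+t-1,x,\nu}\}.$$ The BRWRE itself is $B_t=B^{0,0,(1)}_t$, and $B_{t,x}=\{(y,\nu)\in B_t:y=x\}$. Embedded process. Set $B^*_0=\{(1)\}$ and, for $s\ge1$, $$B^*_s=\bigcup_{\lambda\in B^*_{s-1}}B^*_{s,\lambda},\qquad B^*_{s,\lambda}=\{\nu\in\mathcal T_{sT}:(sT\theta,\nu)\in B^{(s-1)T,(s-1)T\theta,\lambda}_T\}\quad(\lambda\in\mathcal T_{(s-1)T}).$$ *)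

theory Defs
  imports "HOL-Probability.Probability"
begin

definition l1norm :: "real^'d \<Rightarrow> real" where
  "l1norm \<theta> = (\<Sum>i\<in>UNIV. \<bar>\<theta> $ i\<bar>)"

definition Delta :: "(real^'d) set" where
  "Delta = {\<theta>. l1norm \<theta> \<le> 1}"

definition Nstar_dir :: "real^'d \<Rightarrow> nat set" where
  "Nstar_dir \<theta> = {t. 1 \<le> t \<and> (\<forall>i. real t * \<theta> $ i \<in> \<int>)
                      \<and> (\<exists>n::nat. real t - real t * l1norm \<theta> = 2 * real n)}"

text \<open>The lattice point n*theta (meaningful when n*theta is integral).\<close>
definition lattice_pt :: "real^'d \<Rightarrow> nat \<Rightarrow> int^'d" where
  "lattice_pt \<theta> n = (\<chi> i. \<lfloor>real n * \<theta> $ i\<rfloor>)"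

definition genea :: "nat \<Rightarrow> nat list set" where
  "genea t = {\<nu>. length \<nu> = t + 1 \<and> \<nu> ! 0 = 1 \<and> (\<forall>i<length \<nu>. 1 \<le> \<nu> ! i)}"

definition all_genea :: "nat list set" where
  "all_genea = (\<Union>t. genea t)"

definition nbrs :: "int^'d \<Rightarrow> (int^'d) set" where
  "nbrs x = {x + axis i 1 | i. True} \<union> {x - axis i 1 | i. True}"

text \<open>A sample point: omega (t,x,nu) = (X_{t,x,nu}, K_{t,x,nu}).\<close>
type_synonym 'd config = "nat \<times> (int^'d) \<times> nat list \<Rightarrow> (int^'d) \<times> nat"

definition Pq :: "(nat \<times> (int^'d) \<Rightarrow> nat pmf) \<Rightarrow> 'd config measure" where
  "Pq q = (\<Pi>\<^sub>M i\<in>UNIV \<times> UNIV \<times> all_genea.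
             measure_pmf (pair_pmf (pmf_of_set (nbrs (fst (snd i)))) (q (fst i, fst (snd i)))))"

fun branch :: "'d config \<Rightarrow> nat \<Rightarrow> int^'d \<Rightarrow> nat list \<Rightarrow> nat \<Rightarrow> ((int^'d) \<times> nat list) set" where
  "branch \<omega> s z lam 0 = {(z, lam)}"
| "branch \<omega> s z lam (Suc t) =
     (\<Union>(x, \<nu>)\<in>branch \<omega> s z lam t.
        {(y, \<mu>). \<mu> \<in> genea (s + t + 1) \<and> fst (\<omega> (s + t, x, \<nu>)) = y
                 \<and> take (s + t + 1) \<mu> = \<nu> \<and> \<mu> ! (s + t + 1) \<le> snd (\<omega> (s + t, x, \<nu>))})"

definition Bstar_loc :: "'d config \<Rightarrow> real^'d \<Rightarrow> nat \<Rightarrow> nat \<Rightarrow> nat list \<Rightarrow> nat list set" where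
  "Bstar_loc \<omega> \<theta> T s lam =
     {\<nu> \<in> genea (s * T).
        (lattice_pt \<theta> (s * T), \<nu>) \<in> branch \<omega> ((s - 1) * T) (lattice_pt \<theta> ((s - 1) * T)) lam T}"

definition pmf_space :: "nat pmf measure" where
  "pmf_space = vimage_algebra UNIV (\<lambda>p k. pmf p k) (\<Pi>\<^sub>M k\<in>(UNIV::nat set). borel)"

definition env_space :: "(nat \<times> (int^'d) \<Rightarrow> nat pmf) measure" where
  "env_space = (\<Pi>\<^sub>M i\<in>UNIV. pmf_space)"

text \<open>q^*_s(k) = P^q(|B^*_{s,lambda}| = k), evaluated at the canonical lambda = (1,...,1).\<close>
definition qstar :: "(nat \<times> (int^'d) \<Rightarrow> nat pmf) \<Rightarrow> real^'d \<Rightarrow> nat \<Rightarrow> nat \<Rightarrow> nat \<Rightarrow> real" where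
  "qstar q \<theta> T s k =
     measure (Pq q) {\<omega> \<in> space (Pq q).
        card (Bstar_loc \<omega> \<theta> T s (replicate ((s - 1) * T + 1) 1)) = k}"

end

theory Submission
  imports Defs
begin

lemma genea_iff: "\<nu> \<in> genea t \<longleftrightarrow> length \<nu> = t + 1 \<and> \<nu> ! 0 = 1 \<and> (\<forall>i<length \<nu>. 1 \<le> \<nu> ! i)"
  by (simp add: genea_def)

lemma genea_snoc:
  assumes "\<nu> \<in> genea n"
  shows "\<nu> @ [m] \<in> genea (Suc n) \<longleftrightarrow> 1 \<le> m"
proof -
  have l: "length \<nu> = n + 1" "\<nu> ! 0 = 1" "\<forall>i<length \<nu>. 1 \<le> \<nu> ! i" using assms by (auto simp: genea_def)
  show ?thesis
  proof
    assume "\<nu> @ [m] \<in> genea (Suc n)"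
    then have "1 \<le> (\<nu> @ [m]) ! (n+1)" by (auto simp: genea_def)
    with l show "1 \<le> m" by (simp add: nth_append)
  next
    assume m: "1 \<le> m"
    show "\<nu> @ [m] \<in> genea (Suc n)"
      using l m by (auto simp: genea_def nth_append less_Suc_eq)
  qed
qed

lemma genea_split:
  assumes "\<mu> \<in> genea (Suc n)"
  shows "\<mu> = take (Suc n) \<mu> @ [\<mu> ! Suc n]" "take (Suc n) \<mu> \<in> genea n" "1 \<le> \<mu> ! Suc n"
proof -
  have l: "length \<mu> = n + 2" "\<mu> ! 0 = 1" "\<forall>i<length \<mu>. 1 \<le> \<mu> ! i" using assms by (auto simp: genea_def)
  show "\<mu> = take (Suc n) \<mu> @ [\<mu> ! Suc n]"
    using l by (metis Suc_eq_plus1 add_2_eq_Suc' lessI take_Suc_conv_app_nth take_all_iff order_refl)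
  show "take (Suc n) \<mu> \<in> genea n" using l by (auto simp: genea_def)
  show "1 \<le> \<mu> ! Suc n" using l by auto
qed

lemma genea_all: "\<nu> \<in> genea t \<Longrightarrow> \<nu> \<in> all_genea"
  by (auto simp: all_genea_def)

lemma genea_ne: "\<nu> \<in> genea t \<Longrightarrow> \<nu> \<noteq> []"
  by (auto simp: genea_def)

definition stp :: "'d config \<Rightarrow> nat \<Rightarrow> (int^'d) \<times> nat list \<Rightarrow> ((int^'d) \<times> nat list) set" where
  "stp \<omega> n p = {(y, \<mu>). \<mu> \<in> genea (n + 1) \<and> fst (\<omega> (n, fst p, snd p)) = y
                 \<and> take (n + 1) \<mu> = snd p \<and> \<mu> ! (n + 1) \<le> snd (\<omega> (n, fst p, snd p))}"

lemma branch_Suc': "branch \<omega> s z lam (Suc t) = (\<Union>p\<in>branch \<omega> s z lam t. stp \<omega> (s + t) p)"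
  by (auto simp: stp_def)

declare branch.simps(2)[simp del]

lemma stp_char:
  assumes "\<nu> \<in> genea n"
  shows "stp \<omega> n (x, \<nu>) = (\<lambda>m. (fst (\<omega> (n, x, \<nu>)), \<nu> @ [m])) ` {1..snd (\<omega> (n, x, \<nu>))}"
proof -
  have len: "length \<nu> = n + 1" using assms by (simp add: genea_def)
  show ?thesis
  proof (intro set_eqI iffI)
    fix q assume "q \<in> stp \<omega> n (x, \<nu>)"
    then obtain y \<mu> where q: "q = (y, \<mu>)" and h: "\<mu> \<in> genea (Suc n)" "fst (\<omega> (n, x, \<nu>)) = y"
      "take (Suc n) \<mu> = \<nu>" "\<mu> ! Suc n \<le> snd (\<omega> (n, x, \<nu>))"
      by (auto simp: stp_def)
    have "\<mu> = \<nu> @ [\<mu> ! Suc n]" using genea_split(1)[OF h(1)] h(3) by simp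
    moreover have "1 \<le> \<mu> ! Suc n" using genea_split(3)[OF h(1)] .
    ultimately show "q \<in> (\<lambda>m. (fst (\<omega> (n, x, \<nu>)), \<nu> @ [m])) ` {1..snd (\<omega> (n, x, \<nu>))}"
      using q h by (auto intro!: image_eqI[where x="\<mu> ! Suc n"])
  next
    fix q assume "q \<in> (\<lambda>m. (fst (\<omega> (n, x, \<nu>)), \<nu> @ [m])) ` {1..snd (\<omega> (n, x, \<nu>))}"
    then obtain m where q: "q = (fst (\<omega> (n, x, \<nu>)), \<nu> @ [m])" and m: "1 \<le> m" "m \<le> snd (\<omega> (n, x, \<nu>))"
      by auto
    have "\<nu> @ [m] \<in> genea (Suc n)" using genea_snoc[OF assms] m by simp
    then show "q \<in> stp \<omega> n (x, \<nu>)" using q m len by (simp add: stp_def nth_append)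
  qed
qed

lemma branch_inv:
  assumes lam: "lam \<in> genea s"
  shows "p \<in> branch \<omega> s z lam t \<Longrightarrow> snd p \<in> genea (s + t) \<and> take (s + 1) (snd p) = lam"
proof (induction t arbitrary: p)
  case 0
  then show ?case using lam by (auto simp: genea_def)
next
  case (Suc t)
  then obtain q where q: "q \<in> branch \<omega> s z lam t" "p \<in> stp \<omega> (s + t) q"
    by (auto simp: branch_Suc')
  obtain x \<nu> where qq: "q = (x, \<nu>)" by (cases q)
  have IH: "\<nu> \<in> genea (s + t)" "take (s + 1) \<nu> = lam" using Suc.IH[OF q(1)] qq by auto
  from q(2) obtain m where m: "p = (fst (\<omega> (s + t, x, \<nu>)), \<nu> @ [m])" "1 \<le> m"
    unfolding qq stp_char[OF IH(1)] by auto
  have len: "length \<nu> = s + t + 1" using IH(1) by (simp add: genea_def)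
  show ?case using m IH genea_snoc[OF IH(1)] len by auto
qed

lemma finite_stp: "\<nu> \<in> genea n \<Longrightarrow> finite (stp \<omega> n (x, \<nu>))"
  by (simp add: stp_char)

lemma finite_branch:
  assumes lam: "lam \<in> genea s"
  shows "finite (branch \<omega> s z lam t)"
proof (induction t)
  case 0 then show ?case by simp
next
  case (Suc t)
  have "finite (stp \<omega> (s + t) p)" if "p \<in> branch \<omega> s z lam t" for p
    using branch_inv[OF lam that] finite_stp[of "snd p" "s + t" \<omega> "fst p"] by simp
  then show ?case using Suc by (simp add: branch_Suc')
qed

lemma branch_agree:
  assumes lam: "lam \<in> genea s"
    and agree: "\<And>u x \<nu>. s \<le> u \<Longrightarrow> u < s + t \<Longrightarrow> \<nu> \<in> genea u \<Longrightarrow> take (s + 1) \<nu> = lam \<Longrightarrow> \<omega> (u, x, \<nu>) = \<omega>' (u, x, \<nu>)"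
  shows "branch \<omega> s z lam t = branch \<omega>' s z lam t"
  using agree
proof (induction t)
  case 0 then show ?case by simp
next
  case (Suc t)
  have eq: "branch \<omega> s z lam t = branch \<omega>' s z lam t"
    using Suc by auto
  have "stp \<omega> (s + t) p = stp \<omega>' (s + t) p" if "p \<in> branch \<omega> s z lam t" for p
  proof -
    have "snd p \<in> genea (s + t)" "take (s + 1) (snd p) = lam" using branch_inv[OF lam that] by auto
    then have "\<omega> (s + t, fst p, snd p) = \<omega>' (s + t, fst p, snd p)" using Suc.prems[of "s + t" "snd p" "fst p"] by simp
    then show ?thesis by (simp add: stp_def)
  qed
  then show ?case by (simp add: branch_Suc' eq)
qed

lemma genea_prefix_replace:
  assumes "lam' \<in> genea (s + a)" "\<nu> \<in> genea (s + t)"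
  shows "lam' @ drop (s + 1) \<nu> \<in> genea (s + a + t)"
proof -
  have l: "length lam' = s + a + 1" "lam' ! 0 = 1" "\<forall>i<length lam'. 1 \<le> lam' ! i"
    "length \<nu> = s + t + 1" "\<forall>i<length \<nu>. 1 \<le> \<nu> ! i" using assms by (auto simp: genea_def)
  have "\<forall>i<length (lam' @ drop (s + 1) \<nu>). 1 \<le> (lam' @ drop (s + 1) \<nu>) ! i"
  proof (intro allI impI)
    fix i assume i: "i < length (lam' @ drop (s + 1) \<nu>)"
    show "1 \<le> (lam' @ drop (s + 1) \<nu>) ! i"
    proof (cases "i < length lam'")
      case True then show ?thesis using l by (simp add: nth_append)
    next
      case False then show ?thesis using l i by (auto simp: nth_append)
    qed
  qed
  then show ?thesis using l by (auto simp: genea_def nth_append)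
qed

lemma branch_map:
  assumes lam: "lam \<in> genea s" and lam': "lam' \<in> genea (s + a)"
    and hyp: "\<And>u x \<nu>. s \<le> u \<Longrightarrow> \<nu> \<in> genea u \<Longrightarrow> take (s + 1) \<nu> = lam \<Longrightarrow>
       \<omega>' (u, x, \<nu>) = (fst (\<omega> (u + a, x + z, lam' @ drop (s + 1) \<nu>)) - z, snd (\<omega> (u + a, x + z, lam' @ drop (s + 1) \<nu>)))"
  shows "branch \<omega> (s + a) (w + z) lam' t = (\<lambda>(x, \<nu>). (x + z, lam' @ drop (s + 1) \<nu>)) ` branch \<omega>' s w lam t"
proof (induction t)
  case 0
  have "length lam = s + 1" using lam by (simp add: genea_def)
  then show ?case by simp
next
  case (Suc t)
  let ?g = "\<lambda>(x::int^'a, \<nu>::nat list). (x + z, lam' @ drop (s + 1) \<nu>)"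
  have "stp \<omega> (s + a + t) (?g p) = ?g ` stp \<omega>' (s + t) p" if p: "p \<in> branch \<omega>' s w lam t" for p
  proof -
    obtain x \<nu> where pp: "p = (x, \<nu>)" by (cases p)
    have inv: "\<nu> \<in> genea (s + t)" "take (s + 1) \<nu> = lam" using branch_inv[OF lam p] pp by auto
    have len: "length \<nu> = s + t + 1" using inv by (simp add: genea_def)
    define \<nu>2 where "\<nu>2 = lam' @ drop (s + 1) \<nu>"
    have g2: "\<nu>2 \<in> genea (s + a + t)" unfolding \<nu>2_def by (rule genea_prefix_replace[OF lam' inv(1)])
    have h: "\<omega>' (s + t, x, \<nu>) = (fst (\<omega> (s + a + t, x + z, \<nu>2)) - z, snd (\<omega> (s + a + t, x + z, \<nu>2)))"
      using hyp[of "s + t" \<nu> x] inv unfolding \<nu>2_def by (simp add: add_ac)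
    have dr: "drop (s + 1) (\<nu> @ [m]) = drop (s + 1) \<nu> @ [m]" for m using len by simp
    have "stp \<omega> (s + a + t) (x + z, \<nu>2) = ?g ` stp \<omega>' (s + t) (x, \<nu>)"
      unfolding stp_char[OF inv(1)] stp_char[OF g2] h
      by (simp add: image_image dr \<nu>2_def len)
    then show ?thesis unfolding pp \<nu>2_def by simp
  qed
  then have "(\<Union>p\<in>branch \<omega>' s w lam t. stp \<omega> (s + a + t) (?g p)) = (\<Union>p\<in>branch \<omega>' s w lam t. ?g ` stp \<omega>' (s + t) p)"
    by (intro SUP_cong) auto
  then show ?case
    unfolding branch_Suc' Suc.IH by (simp add: image_UN)
qed

section \<open>Measurability of branches\<close>

lemma coord_meas:
  fixes M :: "'i \<Rightarrow> 'b measure"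
  assumes HM: "\<And>i. i \<in> J \<Longrightarrow> sets (M i) = UNIV"
  shows "(\<lambda>\<omega>. \<omega> i) \<in> measurable (PiM J M) (count_space UNIV)"
proof (cases "i \<in> J")
  case True
  have "(\<lambda>\<omega>. \<omega> i) \<in> measurable (PiM J M) (M i)" using True by (rule measurable_component_singleton)
  moreover have "measurable (PiM J M) (M i) = measurable (PiM J M) (count_space UNIV)"
    by (rule measurable_cong_sets[OF refl]) (simp add: HM[OF True])
  ultimately show ?thesis by (simp only:)
next
  case False
  have "(\<lambda>\<omega>. undefined::'b) \<in> measurable (PiM J M) (count_space UNIV)" by (rule measurable_const) simp
  moreover have "(\<lambda>\<omega>. undefined::'b) \<in> measurable (PiM J M) (count_space UNIV) \<longleftrightarrow> (\<lambda>\<omega>. \<omega> i) \<in> measurable (PiM J M) (count_space UNIV)"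
    by (rule measurable_cong[where f="\<lambda>\<omega>. undefined" and g="\<lambda>\<omega>. \<omega> i"]) (use False in \<open>auto simp: space_PiM PiE_def extensional_def\<close>)
  ultimately show ?thesis by blast
qed

definition FS :: "((int^'d) \<times> nat list) set set" where "FS = Collect finite"

lemma countable_FS: "countable (FS :: ((int^'d) \<times> nat list) set set)"
  unfolding FS_def Collect_finite_eq_lists by (intro countable_image) simp

lemma union_meas:
  assumes f: "f \<in> measurable N (count_space (FS::((int^'d) \<times> nat list) set set))"
    and g: "g \<in> measurable N (count_space FS)"
  shows "(\<lambda>x. f x \<union> g x) \<in> measurable N (count_space FS)"
proof (rule measurable_compose_countable'[where g=f and f="\<lambda>a x. a \<union> g x", OF _ f countable_FS])
  fix a :: "((int^'d) \<times> nat list) set" assume a: "a \<in> FS"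
  have "(\<lambda>b. a \<union> b) \<in> measurable (count_space FS) (count_space FS)"
    using a by (auto simp: FS_def)
  from measurable_compose[OF g this] show "(\<lambda>x. a \<union> g x) \<in> measurable N (count_space FS)" .
qed

lemma stp_empty: "\<nu> \<notin> genea n \<Longrightarrow> stp \<omega> n (x, \<nu>) = {}"
  by (auto simp: stp_def dest: genea_split(2))

lemma stp_meas:
  assumes HM: "\<And>i. i \<in> J \<Longrightarrow> sets (M i) = UNIV"
  shows "(\<lambda>\<omega>. stp \<omega> n p) \<in> measurable (PiM J M) (count_space FS)"
proof -
  obtain x \<nu> where pp: "p = (x, \<nu>)" by (cases p)
  show ?thesis
  proof (cases "\<nu> \<in> genea n")
    case True
    let ?S = "\<lambda>v::(int^'d) \<times> nat. (\<lambda>m. (fst v, \<nu> @ [m])) ` {1..snd v}"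
    have "?S \<in> measurable (count_space UNIV) (count_space FS)" by (auto simp: FS_def)
    from measurable_compose[OF coord_meas[where i="(n, x, \<nu>)", OF HM] this]
    show ?thesis unfolding pp stp_char[OF True] .
  next
    case False
    then show ?thesis unfolding pp stp_empty[OF False] by (simp add: FS_def)
  qed
qed

lemma UN_stp_meas:
  assumes HM: "\<And>i. i \<in> J \<Longrightarrow> sets (M i) = UNIV" and P: "finite P"
  shows "(\<lambda>\<omega>. \<Union>p\<in>P. stp \<omega> n p) \<in> measurable (PiM J M) (count_space FS)"
  using P
proof (induction P rule: finite_induct)
  case empty then show ?case by (simp add: FS_def)
next
  case (insert p P)
  then show ?case by (simp add: union_meas stp_meas[OF HM])
qed

lemma branch_meas_FS:
  assumes HM: "\<And>i. i \<in> J \<Longrightarrow> sets (M i) = UNIV" and lam: "lam \<in> genea s"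
  shows "(\<lambda>\<omega>. branch \<omega> s z lam t) \<in> measurable (PiM J M) (count_space FS)"
proof (induction t)
  case 0 then show ?case by (simp add: FS_def)
next
  case (Suc t)
  have "(\<lambda>\<omega>. (\<lambda>P \<omega>. \<Union>p\<in>P. stp \<omega> (s + t) p) (branch \<omega> s z lam t) \<omega>) \<in> measurable (PiM J M) (count_space FS)"
    by (rule measurable_compose_countable'[OF _ Suc countable_FS], rule UN_stp_meas[OF HM], auto simp: FS_def)
  then show ?case by (simp add: branch_Suc')
qed

lemma Bstar_meas:
  assumes HM: "\<And>i. i \<in> J \<Longrightarrow> sets (M i) = UNIV" and lam: "lam \<in> genea ((s - 1) * T)"
  shows "(\<lambda>\<omega>. Bstar_loc \<omega> \<theta> T s lam) \<in> measurable (PiM J M) (count_space UNIV)"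
proof -
  let ?h = "\<lambda>B. {\<nu> \<in> genea (s * T). (lattice_pt \<theta> (s * T), \<nu>) \<in> B}"
  have "?h \<in> measurable (count_space FS) (count_space UNIV)" by simp
  from measurable_compose[OF branch_meas_FS[OF HM lam] this]
  show ?thesis unfolding Bstar_loc_def .
qed

definition I_set :: "(nat \<times> (int^'d) \<times> nat list) set" where
  "I_set = UNIV \<times> UNIV \<times> all_genea"

definition Mq :: "(nat \<times> (int^'d) \<Rightarrow> nat pmf) \<Rightarrow> nat \<times> (int^'d) \<times> nat list \<Rightarrow> ((int^'d) \<times> nat) measure" where
  "Mq q i = measure_pmf (pair_pmf (pmf_of_set (nbrs (fst (snd i)))) (q (fst i, fst (snd i))))"

lemma Pq_eq: "Pq q = PiM I_set (Mq q)"
  unfolding Pq_def I_set_def Mq_def by simp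

lemma sets_Mq[simp]: "sets (Mq q i) = UNIV"
  by (simp add: Mq_def)

lemma space_Mq[simp]: "space (Mq q i) = UNIV"
  by (simp add: Mq_def)

lemma prob_Mq: "prob_space (Mq q i)"
  by (simp add: Mq_def prob_space_measure_pmf)

lemma prob_Pq: "prob_space (Pq q)"
  unfolding Pq_eq by (rule prob_space_PiM) (rule prob_Mq)

lemma space_Pq: "space (Pq q) = PiE I_set (\<lambda>_. UNIV)"
  unfolding Pq_eq by (simp add: space_PiM)

lemma sets_Pq: "sets (Pq q) = sets (Pq q')"
  unfolding Pq_eq by (rule sets_PiM_cong) auto

lemma indep_coords:
  fixes M :: "'i \<Rightarrow> 'a measure"
  assumes MP: "\<And>i. prob_space (M i)"
  shows "prob_space.indep_vars (PiM I M) M (\<lambda>i \<omega>. \<omega> i) I"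
proof -
  interpret M: prob_space "M i" for i by (rule MP)
  interpret product_prob_space M I by unfold_locales
  show ?thesis
    unfolding indep_vars_def2
  proof safe
    fix i assume "i \<in> I" then show "random_variable (M i) (\<lambda>\<omega>. \<omega> i)"
      by (rule measurable_component_singleton)
  next
    show "indep_sets (\<lambda>i. {(\<lambda>\<omega>. \<omega> i) -` A \<inter> space (PiM I M) |A. A \<in> sets (M i)}) I"
      unfolding indep_sets_def
    proof (intro conjI ballI allI impI subsetI)
      fix i X assume "i \<in> I" "X \<in> {(\<lambda>\<omega>. \<omega> i) -` A \<inter> space (PiM I M) |A. A \<in> sets (M i)}"
      then show "X \<in> events"
        using measurable_component_singleton[of i I M] by (auto intro: measurable_sets)
    next
      fix J A assume J: "J \<subseteq> I" "J \<noteq> {}" "finite J"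
        and A: "A \<in> (\<Pi> j\<in>J. {(\<lambda>\<omega>. \<omega> j) -` A \<inter> space (PiM I M) |A. A \<in> sets (M j)})"
      have "\<forall>j\<in>J. \<exists>B. A j = (\<lambda>\<omega>. \<omega> j) -` B \<inter> space (PiM I M) \<and> B \<in> sets (M j)"
        using A by auto
      then obtain B where B: "\<And>j. j \<in> J \<Longrightarrow> A j = (\<lambda>\<omega>. \<omega> j) -` B j \<inter> space (PiM I M) \<and> B j \<in> sets (M j)"
        by metis
      have single: "A j = prod_emb I M {j} (Pi\<^sub>E {j} B)" if "j \<in> J" for j
        using B[OF that] J that by (auto simp: prod_emb_def space_PiM)
      have "(\<Inter>j\<in>J. A j) = prod_emb I M J (Pi\<^sub>E J B)"
        using B J by (auto simp: prod_emb_def space_PiM PiE_def Pi_def)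
      then have "prob (\<Inter>j\<in>J. A j) = (\<Prod>j\<in>J. measure (M j) (B j))"
        using J B by (simp add: measure_PiM_emb)
      moreover have "prob (A j) = measure (M j) (B j)" if "j \<in> J" for j
      proof -
        have "{j} \<subseteq> I" using J that by auto
        then show ?thesis using single[OF that] B[OF that] by (subst single[OF that], subst measure_PiM_emb) auto
      qed
      ultimately show "prob (\<Inter>j\<in>J. A j) = (\<Prod>j\<in>J. prob (A j))"
        by simp
    qed
  qed
qed

section \<open>Part (a): independence\<close>

lemma Bstar_restrict:
  assumes lam: "lam \<in> genea ((s - 1) * T)"
    and K: "\<And>u x \<nu>. (s - 1) * T \<le> u \<Longrightarrow> u < (s - 1) * T + T \<Longrightarrow> \<nu> \<in> genea u \<Longrightarrow> take ((s - 1) * T + 1) \<nu> = lam \<Longrightarrow> (u, x, \<nu>) \<in> K"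
  shows "Bstar_loc (restrict \<omega> K) \<theta> T s lam = Bstar_loc \<omega> \<theta> T s lam"
  unfolding Bstar_loc_def
  by (subst branch_agree[OF lam, where \<omega>="restrict \<omega> K" and \<omega>'=\<omega>]) (auto simp: K)

lemma part_a_indep:
  fixes \<theta> :: "real^'d" and q :: "nat \<times> (int^'d) \<Rightarrow> nat pmf"
  assumes s: "1 \<le> s"
  shows "prob_space.indep_vars (Pq q) (\<lambda>_. count_space UNIV)
          (\<lambda>lam \<omega>. Bstar_loc \<omega> \<theta> T s lam) (genea ((s - 1) * T))"
proof -
  interpret P: prob_space "Pq q" by (rule prob_Pq)
  have ind: "P.indep_vars (Mq q) (\<lambda>i \<omega>. \<omega> i) I_set"
    unfolding Pq_eq by (rule indep_coords) (rule prob_Mq)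
  define K where "K lam = {i \<in> (I_set :: (nat \<times> (int^'d) \<times> nat list) set). take ((s - 1) * T + 1) (snd (snd i)) = lam}" for lam
  have disj: "disjoint_family_on K (genea ((s - 1) * T))"
    by (auto simp: disjoint_family_on_def K_def)
  have r: "P.indep_vars (\<lambda>lam. PiM (K lam) (Mq q)) (\<lambda>lam \<omega>. restrict (\<lambda>i. \<omega> i) (K lam)) (genea ((s - 1) * T))"
    by (rule P.indep_vars_restrict[OF ind _ disj]) (auto simp: K_def)
  have c: "P.indep_vars (\<lambda>_. count_space UNIV)
     (\<lambda>lam \<omega>. Bstar_loc (restrict (\<lambda>i. \<omega> i) (K lam)) \<theta> T s lam) (genea ((s - 1) * T))"
    by (rule P.indep_vars_compose2[OF r]) (rule Bstar_meas, auto)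
  show ?thesis
  proof (subst P.indep_vars_cong[OF refl _ refl])
    fix lam assume lam: "lam \<in> genea ((s - 1) * T)"
    show "(\<lambda>\<omega>. Bstar_loc \<omega> \<theta> T s lam) = (\<lambda>\<omega>. Bstar_loc (restrict (\<lambda>i. \<omega> i) (K lam)) \<theta> T s lam)"
      using Bstar_restrict[OF lam, of "K lam"] by (auto simp: K_def I_set_def genea_all)
  qed (rule c)
qed

section \<open>Part (a): identical distribution\<close>

lemma Bstar_alt:
  assumes s: "1 \<le> s" and lam: "lam \<in> genea ((s - 1) * T)"
  shows "Bstar_loc \<omega> \<theta> T s lam =
    {\<nu>. (lattice_pt \<theta> (s * T), \<nu>) \<in> branch \<omega> ((s - 1) * T) (lattice_pt \<theta> ((s - 1) * T)) lam T}"
proof -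
  have st: "s * T = (s - 1) * T + T" using s by (cases s) auto
  show ?thesis unfolding Bstar_loc_def using branch_inv[OF lam] st by fastforce
qed

lemma drop_img:
  assumes "length lam = n"
  shows "drop n ` {\<nu>. (p, \<nu>) \<in> (\<lambda>(x, \<nu>). (x, lam @ drop n \<nu>)) ` B} = drop n ` {\<nu>. (p, \<nu>) \<in> B}"
proof -
  have "{\<nu>. (p, \<nu>) \<in> (\<lambda>(x, \<nu>). (x, lam @ drop n \<nu>)) ` B} = (\<lambda>\<nu>. lam @ drop n \<nu>) ` {\<nu>. (p, \<nu>) \<in> B}"
    by (auto simp: image_iff) (metis (no_types, lifting) case_prod_conv)
  then show ?thesis using assms by (simp add: image_image)
qed

definition swp :: "nat list \<Rightarrow> nat list \<Rightarrow> nat \<Rightarrow> nat list \<Rightarrow> nat list" where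
  "swp lam lam' n \<nu> = (if take n \<nu> = lam' then lam @ drop n \<nu> else if take n \<nu> = lam then lam' @ drop n \<nu> else \<nu>)"

lemma swp_swp:
  assumes "length lam = n" "length lam' = n"
  shows "swp lam lam' n (swp lam lam' n \<nu>) = \<nu>"
proof -
  have a: "take n \<nu> = lam' \<Longrightarrow> \<nu> = lam' @ drop n \<nu>" by (metis append_take_drop_id)
  have b: "take n \<nu> = lam \<Longrightarrow> \<nu> = lam @ drop n \<nu>" by (metis append_take_drop_id)
  show ?thesis using assms a b by (auto simp: swp_def)
qed

lemma swp_genea:
  assumes lam: "lam \<in> genea m" and lam': "lam' \<in> genea m" and \<nu>: "\<nu> \<in> genea t"
  shows "swp lam lam' (m + 1) \<nu> \<in> genea t"
proof -
  have len: "length lam = m + 1" "length lam' = m + 1" using lam lam' by (auto simp: genea_def)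
  have *: "pre @ drop (m + 1) \<nu> \<in> genea t" if pre: "pre \<in> genea m" and tk: "take (m + 1) \<nu> = pre2" and
    len2: "length pre2 = m + 1" for pre pre2
  proof -
    have "length \<nu> \<ge> m + 1" using tk len2 by (metis length_take min.absorb_iff2)
    moreover have "length \<nu> = t + 1" using \<nu> by (simp add: genea_def)
    ultimately have tt: "t = m + (t - m)" by simp
    have "\<nu> \<in> genea (m + (t - m))" using \<nu> tt by simp
    from genea_prefix_replace[of pre m 0, simplified, OF pre this]
    show ?thesis using tt by simp
  qed
  show ?thesis unfolding swp_def using *[OF lam _ len(2)] *[OF lam' _ len(1)] \<nu> by auto
qed

definition phi_sw :: "nat list \<Rightarrow> nat list \<Rightarrow> nat \<Rightarrow> nat \<times> (int^'d) \<times> nat list \<Rightarrow> nat \<times> (int^'d) \<times> nat list" where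
  "phi_sw lam lam' n i = (fst i, fst (snd i), swp lam lam' n (snd (snd i)))"

lemma part_a_ident:
  fixes \<theta> :: "real^'d" and q :: "nat \<times> (int^'d) \<Rightarrow> nat pmf"
  assumes s: "1 \<le> s" and lam: "lam \<in> genea ((s - 1) * T)" and lam': "lam' \<in> genea ((s - 1) * T)"
  shows "distr (Pq q) (count_space UNIV) (\<lambda>\<omega>. drop ((s - 1) * T + 1) ` Bstar_loc \<omega> \<theta> T s lam)
       = distr (Pq q) (count_space UNIV) (\<lambda>\<omega>. drop ((s - 1) * T + 1) ` Bstar_loc \<omega> \<theta> T s lam')"
proof -
  define m where "m = (s - 1) * T"
  define n where "n = m + 1"
  have lenl: "length lam = n" "length lam' = n" using lam lam' by (auto simp: genea_def n_def m_def)
  define \<phi> where "\<phi> = (phi_sw lam lam' n :: nat \<times> (int^'d) \<times> nat list \<Rightarrow> _)"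
  define R where "R \<omega> = (\<lambda>i\<in>I_set. \<omega> (\<phi> i))" for \<omega> :: "'d config"
  define f where "f l \<omega> = drop n ` Bstar_loc \<omega> \<theta> T s l" for l \<omega>
  have inj: "inj_on \<phi> I_set"
    by (rule inj_on_inverseI[where g=\<phi>]) (auto simp: \<phi>_def phi_sw_def swp_swp[OF lenl])
  have \<phi>I: "\<phi> \<in> I_set \<rightarrow> I_set"
    using swp_genea[OF lam lam'] by (fastforce simp: \<phi>_def phi_sw_def I_set_def all_genea_def n_def m_def)
  have Mphi: "(\<lambda>i. Mq q (\<phi> i)) = Mq q"
    by (auto simp: Mq_def \<phi>_def phi_sw_def)
  have dR: "distr (Pq q) (Pq q) R = Pq q"
    using distr_PiM_reindex[of I_set "Mq q", OF prob_Mq inj \<phi>I] unfolding Pq_eq R_def Mphi .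
  have Rm: "R \<in> measurable (Pq q) (Pq q)"
    unfolding Pq_eq R_def
  proof (rule measurable_restrict)
    fix i :: "nat \<times> (int^'d) \<times> nat list" assume "i \<in> I_set"
    then have "\<phi> i \<in> I_set" using \<phi>I by auto
    from measurable_component_singleton[OF this, of "Mq q"]
    show "(\<lambda>\<omega>. \<omega> (\<phi> i)) \<in> measurable (PiM I_set (Mq q)) (Mq q i)"
      using fun_cong[OF Mphi, of i] by simp
  qed
  have fm: "f l \<in> measurable (Pq q) (count_space UNIV)" if "l \<in> genea m" for l
  proof -
    have "(\<lambda>\<omega>. Bstar_loc \<omega> \<theta> T s l) \<in> measurable (Pq q) (count_space UNIV)"
      unfolding Pq_eq by (rule Bstar_meas) (use that m_def in auto)
    from measurable_compose[OF this, of "\<lambda>B. drop n ` B"] show ?thesis unfolding f_def by simp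
  qed
  have key: "f lam' (R \<omega>) = f lam \<omega>" for \<omega>
  proof -
    have hyp: "R \<omega> (u, x, \<nu>) = (fst (\<omega> (u + 0, x + 0, lam @ drop (m + 1) \<nu>)) - 0, snd (\<omega> (u + 0, x + 0, lam @ drop (m + 1) \<nu>)))"
      if "m \<le> u" "\<nu> \<in> genea u" "take (m + 1) \<nu> = lam'" for u x \<nu>
      using that by (auto simp: R_def \<phi>_def phi_sw_def swp_def I_set_def genea_all n_def)
    have br: "branch \<omega> (m + 0) (w + 0) lam T = (\<lambda>(x, \<nu>). (x + 0, lam @ drop (m + 1) \<nu>)) ` branch (R \<omega>) m w lam' T" for w
      by (rule branch_map[OF lam'[folded m_def]]) (use lam m_def hyp in auto)
    then have br': "branch \<omega> m w lam T = (\<lambda>(x, \<nu>). (x, lam @ drop n \<nu>)) ` branch (R \<omega>) m w lam' T" for w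
      using br[of w] by (simp add: n_def)
    have dd: "drop n (lam @ drop n \<nu>) = drop n \<nu>" for \<nu> using lenl by simp
    show ?thesis
      unfolding f_def Bstar_alt[OF s lam] Bstar_alt[OF s lam'] m_def[symmetric] br'
      using drop_img[OF lenl(1)] by metis
  qed
  have "distr (Pq q) (count_space UNIV) (f lam) = distr (Pq q) (count_space UNIV) (f lam' \<circ> R)"
    by (rule distr_cong) (auto simp: key)
  also have "\<dots> = distr (distr (Pq q) (Pq q) R) (count_space UNIV) (f lam')"
    by (rule distr_distr[symmetric, OF fm Rm]) (use lam' m_def in auto)
  also have "\<dots> = distr (Pq q) (count_space UNIV) (f lam')" by (simp only: dR)
  finally show ?thesis unfolding f_def n_def m_def .
qed

section \<open>Measurability of the quenched probabilities\<close>

lemma pmf_meas[measurable]: "(\<lambda>p. pmf p k) \<in> borel_measurable pmf_space"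
proof -
  have "(\<lambda>p k. pmf p k) \<in> measurable pmf_space (\<Pi>\<^sub>M k\<in>(UNIV::nat set). borel)"
    unfolding pmf_space_def by (rule measurable_vimage_algebra1) (simp add: space_PiM)
  from measurable_component_singleton'[OF this measurable_ident, of k] show ?thesis by simp
qed

lemma nbrs_finite: "finite (nbrs x)"
  unfolding nbrs_def
proof -
  have "{x + axis i 1 | i. True} = (\<lambda>i. x + axis i 1) ` UNIV" "{x - axis i 1 | i. True} = (\<lambda>i. x - axis i 1) ` UNIV"
    by auto
  then show "finite ({x + axis i 1 | i. True} \<union> {x - axis i 1 | i. True})" by simp
qed

lemma nbrs_ne: "nbrs x \<noteq> {}"
  unfolding nbrs_def by auto

lemma pair_emeas_meas:
  assumes N: "finite N" "N \<noteq> {}"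
  shows "(\<lambda>p. emeasure (measure_pmf (pair_pmf (pmf_of_set N) p)) X) \<in> borel_measurable pmf_space"
proof -
  have eq: "emeasure (measure_pmf (pair_pmf (pmf_of_set N) p)) X =
      (\<Sum>a\<in>N. \<Sum>b. ennreal (pmf p b) * indicator X (a, b)) / of_nat (card N)" for p
  proof -
    have "emeasure (measure_pmf (pair_pmf (pmf_of_set N) p)) X = (\<integral>\<^sup>+z. indicator X z \<partial>measure_pmf (pair_pmf (pmf_of_set N) p))"
      by simp
    also have "\<dots> = (\<integral>\<^sup>+a. \<integral>\<^sup>+b. indicator X (a, b) \<partial>measure_pmf p \<partial>measure_pmf (pmf_of_set N))"
      by (rule nn_integral_pair_pmf')
    also have "\<dots> = (\<Sum>a\<in>N. \<integral>\<^sup>+b. indicator X (a, b) \<partial>measure_pmf p) / of_nat (card N)"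
      using N by (subst nn_integral_pmf_of_set) auto
    also have "\<dots> = (\<Sum>a\<in>N. \<Sum>b. ennreal (pmf p b) * indicator X (a, b)) / of_nat (card N)"
      by (simp add: nn_integral_measure_pmf nn_integral_count_space_nat)
    finally show ?thesis .
  qed
  show ?thesis unfolding eq by measurable
qed

lemma Mq_meas:
  assumes qm: "(\<lambda>r. r tx) \<in> measurable N pmf_space"
  shows "(\<lambda>r. emeasure (Mq r (fst tx, snd tx, \<nu>)) X) \<in> borel_measurable N"
proof -
  have "(\<lambda>p. emeasure (measure_pmf (pair_pmf (pmf_of_set (nbrs (snd tx))) p)) X) \<in> borel_measurable pmf_space"
    by (rule pair_emeas_meas[OF nbrs_finite nbrs_ne])
  from measurable_compose[OF qm this] show ?thesis by (simp add: Mq_def)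
qed

lemma kernel_meas:
  assumes qm: "\<And>tx. (\<lambda>r. r tx) \<in> measurable N pmf_space"
    and E: "E \<in> sets (PiM (I_set :: (nat \<times> (int^'d) \<times> nat list) set) (\<lambda>_. count_space UNIV))"
  shows "(\<lambda>r. emeasure (Pq r) E) \<in> borel_measurable N"
proof -
  let ?C = "\<lambda>_::nat \<times> (int^'d) \<times> nat list. count_space (UNIV :: ((int^'d) \<times> nat) set)"
  have sP: "sets (Pq r) = sets (PiM I_set ?C)" for r
    unfolding Pq_eq by (rule sets_PiM_cong) auto
  have spP: "space (Pq r) = (\<Pi>\<^sub>E i\<in>I_set. space (?C i))" for r
    by (simp add: space_Pq)
  from E have E': "E \<in> sigma_sets (\<Pi>\<^sub>E i\<in>I_set. space (?C i)) (prod_algebra I_set ?C)"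
    by (simp add: sets_PiM)
  show ?thesis
    using Int_stable_prod_algebra prod_algebra_sets_into_space E'
  proof (induction rule: sigma_sets_induct_disjoint)
    case (basic A)
    then obtain J X where A: "A = prod_emb I_set ?C J (Pi\<^sub>E J X)" "finite J" "J \<subseteq> I_set"
      "\<And>i. i \<in> J \<Longrightarrow> X i \<in> sets (?C i)"
      by (auto elim!: prod_algebraE)
    have "emeasure (Pq r) A = (\<Prod>j\<in>J. emeasure (Mq r j) (X j))" for r
    proof -
      have "A = prod_emb I_set (Mq r) J (Pi\<^sub>E J X)" unfolding A(1) by (simp add: prod_emb_def)
      then show ?thesis unfolding Pq_eq using A by (simp add: emeasure_PiM_emb prob_Mq)
    qed
    moreover have "(\<lambda>r. \<Prod>j\<in>J. emeasure (Mq r j) (X j)) \<in> borel_measurable N"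
    proof (rule borel_measurable_prod_ennreal)
      fix j :: "nat \<times> (int^'d) \<times> nat list"
      obtain t x \<nu> where j: "j = (t, x, \<nu>)" by (cases j)
      show "(\<lambda>r. emeasure (Mq r j) (X j)) \<in> borel_measurable N"
        using Mq_meas[OF qm[of "(t, x)"], of \<nu> "X j"] j by simp
    qed
    ultimately show ?case by simp
  next
    case empty then show ?case by simp
  next
    case (compl A)
    have AP: "A \<in> sets (Pq r)" for r using compl(1) sP by (simp add: sets_PiM)
    have "emeasure (Pq r) ((\<Pi>\<^sub>E i\<in>I_set. space (?C i)) - A) = 1 - emeasure (Pq r) A" for r
    proof -
      interpret prob_space "Pq r" by (rule prob_Pq)
      show ?thesis using emeasure_compl[OF AP[of r]] emeasure_space_1 spP[of r] by simp
    qed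
    then show ?case using compl(2) by simp
  next
    case (union A)
    have AP: "range A \<subseteq> sets (Pq r)" for r using union(2) sP by (simp add: sets_PiM)
    have "emeasure (Pq r) (\<Union>i. A i) = (\<Sum>i. emeasure (Pq r) (A i))" for r
      using suminf_emeasure[OF AP[of r] union(1)] by simp
    then show ?case using union(3) by simp
  qed
qed

abbreviation CS :: "nat \<times> (int^'d) \<times> nat list \<Rightarrow> ((int^'d) \<times> nat) measure" where
  "CS \<equiv> \<lambda>_. count_space UNIV"

definition Ek :: "real^'d \<Rightarrow> nat \<Rightarrow> nat \<Rightarrow> nat \<Rightarrow> 'd config set" where
  "Ek \<theta> T s k = {\<omega> \<in> space (PiM I_set CS). card (Bstar_loc \<omega> \<theta> T s (replicate ((s - 1) * T + 1) 1)) = k}"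

lemma rep_genea: "replicate (m + 1) 1 \<in> genea m"
  unfolding genea_def by (simp del: replicate.simps add: nth_replicate)

lemma Ek_sets_gen:
  assumes HM: "\<And>i. i \<in> J \<Longrightarrow> sets (M i) = UNIV"
  shows "{\<omega> \<in> space (PiM J M). card (Bstar_loc \<omega> \<theta> T s (replicate ((s - 1) * T + 1) 1)) = k} \<in> sets (PiM J M)"
proof -
  have "(\<lambda>\<omega>. card (Bstar_loc \<omega> \<theta> T s (replicate ((s - 1) * T + 1) 1))) \<in> measurable (PiM J M) (count_space UNIV)"
    using measurable_compose[OF Bstar_meas[OF HM rep_genea], where g="card :: nat list set \<Rightarrow> nat" and L="count_space UNIV"] by simp
  from measurable_sets[OF this, of "{k}"] show ?thesis by (simp add: vimage_def Int_def conj_commute)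
qed

lemma Ek_sets: "Ek \<theta> T s k \<in> sets (PiM I_set CS)"
  unfolding Ek_def by (rule Ek_sets_gen) auto

lemma space_Pq_CS: "space (Pq q) = space (PiM I_set CS)"
  by (simp add: space_Pq space_PiM)

lemma qstar_Ek: "qstar q \<theta> T s k = measure (Pq q) (Ek \<theta> T s k)"
  unfolding qstar_def Ek_def space_Pq_CS ..

lemma coord_meas_gen:
  fixes L :: "'b measure"
  assumes "space L = UNIV"
  shows "(\<lambda>\<omega>. \<omega> i) \<in> measurable (PiM J (\<lambda>_. L)) L"
proof (cases "i \<in> J")
  case True then show ?thesis by (rule measurable_component_singleton)
next
  case False
  have "(\<lambda>\<omega>. undefined::'b) \<in> measurable (PiM J (\<lambda>_. L)) L" by (rule measurable_const) (simp add: assms)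
  moreover have "(\<lambda>\<omega>. undefined::'b) \<in> measurable (PiM J (\<lambda>_. L)) L \<longleftrightarrow> (\<lambda>\<omega>. \<omega> i) \<in> measurable (PiM J (\<lambda>_. L)) L"
    by (rule measurable_cong[where f="\<lambda>\<omega>. undefined" and g="\<lambda>\<omega>. \<omega> i"]) (use False in \<open>auto simp: space_PiM PiE_def extensional_def\<close>)
  ultimately show ?thesis by blast
qed

lemma space_pmf_space[simp]: "space pmf_space = UNIV"
  by (simp add: pmf_space_def)

lemma qstar_meas:
  assumes qm: "\<And>tx. (\<lambda>r. r tx) \<in> measurable N pmf_space"
  shows "(\<lambda>r. qstar r \<theta> T s) \<in> measurable N (\<Pi>\<^sub>M k\<in>(UNIV::nat set). borel)"
proof -
  have "(\<lambda>r. qstar r \<theta> T s k) \<in> borel_measurable N" for k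
  proof -
    have "(\<lambda>r. emeasure (Pq r) (Ek \<theta> T s k)) \<in> borel_measurable N"
      by (rule kernel_meas[OF qm Ek_sets])
    then have "(\<lambda>r. enn2real (emeasure (Pq r) (Ek \<theta> T s k))) \<in> borel_measurable N"
      by (rule borel_measurable_enn2real)
    then show ?thesis unfolding qstar_Ek measure_def .
  qed
  then show ?thesis
    by (intro measurable_PiM_single'[where f="\<lambda>k r. qstar r \<theta> T s k" and I=UNIV and M="\<lambda>_. borel" and N=N, simplified]) auto
qed

lemma window:
  fixes \<theta> :: "real^'d" and q q' :: "nat \<times> (int^'d) \<Rightarrow> nat pmf"
  assumes agree: "\<And>t x. (s - 1) * T \<le> t \<Longrightarrow> t < (s - 1) * T + T \<Longrightarrow> q (t, x) = q' (t, x)"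
  shows "qstar q \<theta> T s k = qstar q' \<theta> T s k"
proof -
  define lam where "lam = (replicate ((s - 1) * T + 1) 1 :: nat list)"
  have lam: "lam \<in> genea ((s - 1) * T)" unfolding lam_def by (rule rep_genea)
  define Kt where "Kt = {i \<in> (I_set :: (nat \<times> (int^'d) \<times> nat list) set). (s - 1) * T \<le> fst i \<and> fst i < (s - 1) * T + T}"
  define E' where "E' = {\<omega> \<in> space (PiM Kt CS). card (Bstar_loc \<omega> \<theta> T s lam) = k}"
  have E'sets: "E' \<in> sets (PiM Kt (Mq r))" for r
  proof -
    have "E' = {\<omega> \<in> space (PiM Kt (Mq r)). card (Bstar_loc \<omega> \<theta> T s lam) = k}"
      unfolding E'_def by (simp add: space_PiM)
    then show ?thesis unfolding lam_def by (simp only: Ek_sets_gen[OF sets_Mq])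
  qed
  have main: "qstar r \<theta> T s k = measure (PiM Kt (Mq r)) E'" for r
  proof -
    have d: "distr (Pq r) (PiM Kt (Mq r)) (\<lambda>\<omega>. restrict \<omega> Kt) = PiM Kt (Mq r)"
      using distr_PiM_reindex[of I_set "Mq r" id Kt, OF prob_Mq] unfolding Pq_eq
      by (simp add: Kt_def restrict_def)
    have m: "(\<lambda>\<omega>. restrict \<omega> Kt) \<in> measurable (Pq r) (PiM Kt (Mq r))"
      unfolding Pq_eq by (rule measurable_restrict_subset) (auto simp: Kt_def)
    have pre: "(\<lambda>\<omega>. restrict \<omega> Kt) -` E' \<inter> space (Pq r) = Ek \<theta> T s k"
    proof -
      have "Bstar_loc (restrict \<omega> Kt) \<theta> T s lam = Bstar_loc \<omega> \<theta> T s lam" for \<omega>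
        by (rule Bstar_restrict[OF lam]) (auto simp: Kt_def I_set_def genea_all)
      then show ?thesis
        unfolding E'_def Ek_def lam_def[symmetric] space_Pq_CS by (auto simp: space_PiM)
    qed
    show ?thesis unfolding qstar_Ek using measure_distr[OF m E'sets[of r]] d pre by simp
  qed
  have "PiM Kt (Mq q) = PiM Kt (Mq q')"
    by (rule PiM_cong) (auto simp: Kt_def Mq_def agree)
  then show ?thesis using main[of q] main[of q'] by simp
qed

section \<open>Part (b): independence\<close>

lemma part_b_indep:
  fixes \<theta> :: "real^'d" and Q :: "(nat \<times> (int^'d) \<Rightarrow> nat pmf) measure"
  assumes Q: "prob_space Q"
    and Q_indep: "prob_space.indep_vars Q (\<lambda>_. pmf_space) (\<lambda>i q. q i) UNIV"
    and T1: "1 \<le> T"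
  shows "prob_space.indep_vars Q (\<lambda>_. \<Pi>\<^sub>M k\<in>(UNIV::nat set). borel) (\<lambda>s q. qstar q \<theta> T s) {1..}"
proof -
  interpret Q: prob_space Q by (rule Q)
  define W where "W s = {tx :: nat \<times> (int^'d). (s - 1) * T \<le> fst tx \<and> fst tx < (s - 1) * T + T}" for s
  have disj: "disjoint_family_on W {1..}"
    unfolding disjoint_family_on_def
  proof (intro ballI impI)
    fix s s' :: nat assume s: "s \<in> {1..}" "s' \<in> {1..}" "s \<noteq> s'"
    have *: "W s \<inter> W s' = {}" if "s < s'" "1 \<le> s" for s s'
    proof -
      have "(s - 1) * T + T = s * T" using that by (cases s) auto
      also have "\<dots> \<le> (s' - 1) * T" using that by (intro mult_le_mono1) auto
      finally show ?thesis by (auto simp: W_def)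
    qed
    show "W s \<inter> W s' = {}"
      using s *[of s s'] *[of s' s] by (cases "s < s'") auto
  qed
  have r: "Q.indep_vars (\<lambda>s. PiM (W s) (\<lambda>_. pmf_space)) (\<lambda>s q. restrict (\<lambda>i. q i) (W s)) {1..}"
    by (rule Q.indep_vars_restrict[OF Q_indep _ disj]) auto
  have c: "Q.indep_vars (\<lambda>_. \<Pi>\<^sub>M k\<in>(UNIV::nat set). borel) (\<lambda>s q. qstar (restrict (\<lambda>i. q i) (W s)) \<theta> T s) {1..}"
    by (rule Q.indep_vars_compose2[OF r]) (rule qstar_meas, rule coord_meas_gen, simp)
  show ?thesis
  proof (subst Q.indep_vars_cong[OF refl _ refl])
    fix s :: nat
    show "(\<lambda>q. qstar q \<theta> T s) = (\<lambda>q. qstar (restrict (\<lambda>i. q i) (W s)) \<theta> T s)"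
      by (intro ext window) (auto simp: W_def)
  qed (rule c)
qed

section \<open>Part (b): identical distribution\<close>

lemma space_env: "space env_space = (UNIV :: (nat \<times> (int^'d) \<Rightarrow> nat pmf) set)"
  by (simp add: env_space_def space_PiM)

lemma Q_is_prod:
  fixes Q :: "(nat \<times> (int^'d) \<Rightarrow> nat pmf) measure"
  assumes Q: "prob_space Q" "sets Q = sets env_space"
    and Q_indep: "prob_space.indep_vars Q (\<lambda>_. pmf_space) (\<lambda>i q. q i) UNIV"
    and Q_ident: "\<forall>i j. distr Q pmf_space (\<lambda>q. q i) = distr Q pmf_space (\<lambda>q. q j)"
  shows "Q = PiM UNIV (\<lambda>_. distr Q pmf_space (\<lambda>q. q c0))"
proof -
  interpret prob_space Q by (rule Q(1))
  define D where "D = distr Q pmf_space (\<lambda>q. q c0)"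
  have Dj: "distr Q pmf_space (\<lambda>q. q j) = D" for j using Q_ident D_def by metis
  have rv: "(\<lambda>q. q j) \<in> measurable Q pmf_space" for j
    using Q_indep unfolding indep_vars_def2 by (cases j) auto
  have probD: "prob_space D" unfolding D_def by (rule prob_space_distr[OF rv])
  interpret D: prob_space D by (rule probD)
  have sD: "sets D = sets pmf_space" by (simp add: D_def)
  have spD: "space D = UNIV" by (simp add: D_def)
  have spQ: "space Q = UNIV" using sets_eq_imp_space_eq[OF Q(2)] by (simp add: space_env)
  have sQ: "sets Q = sets (PiM UNIV (\<lambda>_. D))"
    unfolding Q(2) env_space_def by (rule sets_PiM_cong) (auto simp: sD)
  show ?thesis unfolding D_def[symmetric]
  proof (rule measure_eqI_PiM_infinite[where I=UNIV and M="\<lambda>_. D"])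
    show "sets Q = sets (PiM UNIV (\<lambda>_. D))" by (rule sQ)
    show "finite_measure Q" by unfold_locales
  next
    fix A J assume J: "finite J" "J \<subseteq> (UNIV :: (nat \<times> (int^'d)) set)" and A: "\<And>i. i \<in> J \<Longrightarrow> A i \<in> sets D"
    have R: "emeasure (PiM UNIV (\<lambda>_. D)) (prod_emb UNIV (\<lambda>_. D) J (Pi\<^sub>E J A)) = (\<Prod>j\<in>J. emeasure D (A j))"
      using J A by (intro emeasure_PiM_emb probD) auto
    have L: "emeasure Q (prod_emb UNIV (\<lambda>_. D) J (Pi\<^sub>E J A)) = (\<Prod>j\<in>J. emeasure D (A j))"
    proof (cases "J = {}")
      case True
      have "prod_emb UNIV (\<lambda>_. D) J (Pi\<^sub>E J A) = space Q"
        using True by (auto simp: prod_emb_def spQ spD)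
      then show ?thesis using True emeasure_space_1 by simp
    next
      case False
      have pe: "prod_emb UNIV (\<lambda>_. D) J (Pi\<^sub>E J A) = (\<Inter>j\<in>J. (\<lambda>q. q j) -` A j \<inter> space Q)"
        using False by (auto simp: prod_emb_def spQ spD PiE_def Pi_def)
      have A': "A j \<in> sets pmf_space" if "j \<in> J" for j using A[OF that] sD by simp
      have "prob (\<Inter>j\<in>J. (\<lambda>q. q j) -` A j \<inter> space Q) = (\<Prod>j\<in>J. prob ((\<lambda>q. q j) -` A j \<inter> space Q))"
        by (rule indep_varsD[OF Q_indep False J(1) J(2) A'])
      also have "\<dots> = (\<Prod>j\<in>J. measure D (A j))"
      proof (rule prod.cong[OF refl])
        fix j assume "j \<in> J"
        then show "prob ((\<lambda>q. q j) -` A j \<inter> space Q) = measure D (A j)"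
          using measure_distr[OF rv A'] Dj by metis
      qed
      finally have "prob (prod_emb UNIV (\<lambda>_. D) J (Pi\<^sub>E J A)) = (\<Prod>j\<in>J. measure D (A j))" unfolding pe .
      moreover have "(\<Prod>j\<in>J. emeasure D (A j)) = ennreal (\<Prod>j\<in>J. measure D (A j))"
        using D.emeasure_eq_measure by (simp add: prod_ennreal)
      ultimately show ?thesis by (simp add: emeasure_eq_measure)
    qed
    show "emeasure Q (prod_emb UNIV (\<lambda>_. D) J (Pi\<^sub>E J A)) = emeasure (PiM UNIV (\<lambda>_. D)) (prod_emb UNIV (\<lambda>_. D) J (Pi\<^sub>E J A))"
      using L R by simp
  qed simp
qed

lemma distr_PiM_map_pmf:
  fixes p :: "'i \<Rightarrow> 'a pmf" and g :: "'a \<Rightarrow> 'b"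
  shows "distr (PiM I (\<lambda>i. measure_pmf (p i))) (PiM I (\<lambda>i. measure_pmf (map_pmf g (p i)))) (\<lambda>\<omega>. \<lambda>i\<in>I. g (\<omega> i))
       = PiM I (\<lambda>i. measure_pmf (map_pmf g (p i)))"
proof (rule measure_eqI_PiM_infinite[symmetric, OF refl])
  show "sets (distr (PiM I (\<lambda>i. measure_pmf (p i))) (PiM I (\<lambda>i. measure_pmf (map_pmf g (p i)))) (\<lambda>\<omega>. \<lambda>i\<in>I. g (\<omega> i)))
     = sets (PiM I (\<lambda>i. measure_pmf (map_pmf g (p i))))" by simp
  interpret prob_space "PiM I (\<lambda>i. measure_pmf (map_pmf g (p i)))"
    by (rule prob_space_PiM) (simp add: prob_space_measure_pmf)
  show "finite_measure (PiM I (\<lambda>i. measure_pmf (map_pmf g (p i))))" by unfold_locales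
next
  fix A J assume J: "finite J" "J \<subseteq> I" and A: "\<And>i. i \<in> J \<Longrightarrow> A i \<in> sets (measure_pmf (map_pmf g (p i)))"
  have m: "(\<lambda>\<omega>. \<lambda>i\<in>I. g (\<omega> i)) \<in> measurable (PiM I (\<lambda>i. measure_pmf (p i))) (PiM I (\<lambda>i. measure_pmf (map_pmf g (p i))))"
    by (rule measurable_restrict) (rule measurable_compose[OF measurable_component_singleton], auto)
  have pre: "(\<lambda>\<omega>. \<lambda>i\<in>I. g (\<omega> i)) -` prod_emb I (\<lambda>i. measure_pmf (map_pmf g (p i))) J (Pi\<^sub>E J A) \<inter> space (PiM I (\<lambda>i. measure_pmf (p i)))
     = prod_emb I (\<lambda>i. measure_pmf (p i)) J (Pi\<^sub>E J (\<lambda>j. g -` A j))"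
    using J by (auto simp: prod_emb_def space_PiM PiE_def Pi_def extensional_def)
  have "emeasure (distr (PiM I (\<lambda>i. measure_pmf (p i))) (PiM I (\<lambda>i. measure_pmf (map_pmf g (p i)))) (\<lambda>\<omega>. \<lambda>i\<in>I. g (\<omega> i)))
          (prod_emb I (\<lambda>i. measure_pmf (map_pmf g (p i))) J (Pi\<^sub>E J A))
      = emeasure (PiM I (\<lambda>i. measure_pmf (p i))) (prod_emb I (\<lambda>i. measure_pmf (p i)) J (Pi\<^sub>E J (\<lambda>j. g -` A j)))"
    using J A by (subst emeasure_distr[OF m]) (auto simp: pre intro!: sets_PiM_I_finite measurable_prod_emb)
  also have "\<dots> = (\<Prod>j\<in>J. emeasure (measure_pmf (p j)) (g -` A j))"
    using J by (intro emeasure_PiM_emb) (auto simp: prob_space_measure_pmf)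
  also have "\<dots> = (\<Prod>j\<in>J. emeasure (measure_pmf (map_pmf g (p j))) (A j))"
    by (intro prod.cong refl) (simp add: map_pmf_rep_eq emeasure_distr)
  also have "\<dots> = emeasure (PiM I (\<lambda>i. measure_pmf (map_pmf g (p i)))) (prod_emb I (\<lambda>i. measure_pmf (map_pmf g (p i))) J (Pi\<^sub>E J A))"
    using J A by (intro emeasure_PiM_emb[symmetric]) (auto simp: prob_space_measure_pmf)
  finally show "emeasure (PiM I (\<lambda>i. measure_pmf (map_pmf g (p i)))) (prod_emb I (\<lambda>i. measure_pmf (map_pmf g (p i))) J (Pi\<^sub>E J A)) =
     emeasure (distr (PiM I (\<lambda>i. measure_pmf (p i))) (PiM I (\<lambda>i. measure_pmf (map_pmf g (p i)))) (\<lambda>\<omega>. \<lambda>i\<in>I. g (\<omega> i))) (prod_emb I (\<lambda>i. measure_pmf (map_pmf g (p i))) J (Pi\<^sub>E J A))"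
    by simp
qed

lemma lattice_add:
  assumes Tint: "\<forall>i. real T * \<theta> $ i \<in> \<int>"
  shows "lattice_pt \<theta> (m * T + T) = lattice_pt \<theta> (m * T) + lattice_pt \<theta> T"
proof -
  have "\<lfloor>real (m * T + T) * \<theta> $ i\<rfloor> = \<lfloor>real (m * T) * \<theta> $ i\<rfloor> + \<lfloor>real T * \<theta> $ i\<rfloor>" for i
  proof -
    obtain c where c: "real T * \<theta> $ i = of_int c" using Tint by (meson Ints_cases)
    have a: "real (m * T + T) * \<theta> $ i = of_int ((int m + 1) * c)"
      by (simp add: algebra_simps c[symmetric])
    have b: "real (m * T) * \<theta> $ i = of_int (int m * c)"
      by (simp add: algebra_simps c[symmetric])
    show ?thesis unfolding a b c by (simp add: algebra_simps)
  qed
  then show ?thesis by (simp add: lattice_pt_def vec_eq_iff)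
qed

lemma lattice_zero: "lattice_pt \<theta> 0 = 0"
  by (simp add: lattice_pt_def vec_eq_iff)

lemma genea_cons: "\<nu> \<in> genea t \<Longrightarrow> \<nu> = 1 # drop 1 \<nu>"
  by (cases \<nu>) (auto simp: genea_def)

lemma nbrs_shift: "(\<lambda>y. y - z) ` nbrs (x + z) = nbrs x"
proof -
  have "(\<lambda>y. y - z) ` nbrs (x + z) = {x + axis i 1 | i. True} \<union> {x - axis i 1 | i. True}"
    unfolding nbrs_def by (auto simp: algebra_simps image_iff)
  then show ?thesis by (simp add: nbrs_def)
qed

lemma meas_Mq_iff: "measurable M (Mq q i) = measurable M (count_space UNIV)"
  by (rule measurable_cong_sets) auto

lemma meas_Mq_iff2: "measurable (Mq q i) N = measurable (count_space UNIV) N"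
  by (rule measurable_cong_sets) auto

lemma shift_qstar:
  fixes \<theta> :: "real^'d" and q :: "nat \<times> (int^'d) \<Rightarrow> nat pmf"
  assumes Tint: "\<forall>i. real T * \<theta> $ i \<in> \<int>" and s: "1 \<le> s"
  shows "qstar q \<theta> T s k = qstar (\<lambda>tx. q (fst tx + (s - 1) * T, snd tx + lattice_pt \<theta> ((s - 1) * T))) \<theta> T 1 k"
proof -
  define a where "a = (s - 1) * T"
  define z where "z = lattice_pt \<theta> a"
  define lam' where "lam' = (replicate (a + 1) 1 :: nat list)"
  define q' where "q' = (\<lambda>tx. q (fst tx + a, snd tx + z))"
  define f where "f = (\<lambda>i::nat \<times> (int^'d) \<times> nat list. (fst i + a, fst (snd i) + z, lam' @ drop 1 (snd (snd i))))"
  define tr where "tr = (\<lambda>(y::int^'d, k::nat). (y - z, k))"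
  define P where "P = (\<lambda>i::nat \<times> (int^'d) \<times> nat list. pair_pmf (pmf_of_set (nbrs (fst (snd i) + z))) (q (fst i + a, fst (snd i) + z)))"
  define R1 where "R1 \<omega> = (\<lambda>n\<in>I_set. \<omega> (f n))" for \<omega> :: "'d config"
  define R2 where "R2 \<omega> = (\<lambda>i\<in>I_set. tr (\<omega> i))" for \<omega> :: "'d config"
  define \<psi> where "\<psi> \<omega> = (\<lambda>i\<in>I_set. tr (\<omega> (f i)))" for \<omega> :: "'d config"
  have lam': "lam' \<in> genea a" unfolding lam'_def by (rule rep_genea)
  have inj: "inj_on f I_set"
  proof (rule inj_onI)
    fix i j assume ij: "i \<in> I_set" "j \<in> I_set" "f i = f j"
    obtain u x \<nu> where i: "i = (u, x, \<nu>)" by (cases i)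
    obtain u' x' \<nu>' where j: "j = (u', x', \<nu>')" by (cases j)
    have "\<nu> = 1 # drop 1 \<nu>" "\<nu>' = 1 # drop 1 \<nu>'"
      using ij i j genea_cons by (auto simp: I_set_def all_genea_def)
    then show "i = j" using ij i j by (auto simp: f_def)
  qed
  have fI: "f \<in> I_set \<rightarrow> I_set"
  proof
    fix i :: "nat \<times> (int^'d) \<times> nat list" assume "i \<in> I_set"
    then obtain u x \<nu> t where i: "i = (u, x, \<nu>)" "\<nu> \<in> genea t" by (auto simp: I_set_def all_genea_def)
    have "lam' @ drop (0 + 1) \<nu> \<in> genea (0 + a + t)"
      by (rule genea_prefix_replace) (use lam' i in simp_all)
    then show "f i \<in> I_set" using i by (auto simp: f_def I_set_def all_genea_def)
  qed
  have MP: "Mq q (f i) = measure_pmf (P i)" for i by (simp add: Mq_def f_def P_def)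
  have MP': "Mq q' i = measure_pmf (map_pmf tr (P i))" for i
  proof -
    have "map_pmf tr (P i) = pair_pmf (map_pmf (\<lambda>y. y - z) (pmf_of_set (nbrs (fst (snd i) + z)))) (map_pmf (\<lambda>k. k) (q (fst i + a, fst (snd i) + z)))"
      unfolding P_def tr_def by (rule map_pair)
    also have "\<dots> = pair_pmf (pmf_of_set (nbrs (fst (snd i)))) (q' (fst i, fst (snd i)))"
      by (simp add: map_pmf_of_set_inj nbrs_finite nbrs_ne nbrs_shift q'_def inj_on_def)
    finally show ?thesis by (simp add: Mq_def)
  qed
  have N1: "PiM I_set (\<lambda>i. Mq q (f i)) = PiM I_set (\<lambda>i. measure_pmf (P i))" by (simp add: MP)
  have Pq': "Pq q' = PiM I_set (\<lambda>i. measure_pmf (map_pmf tr (P i)))" unfolding Pq_eq by (rule PiM_cong) (simp_all add: MP')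
  have d1: "distr (Pq q) (PiM I_set (\<lambda>i. measure_pmf (P i))) R1 = PiM I_set (\<lambda>i. measure_pmf (P i))"
    using distr_PiM_reindex[of I_set "Mq q" f I_set, OF prob_Mq inj fI] unfolding Pq_eq R1_def N1 .
  have d2: "distr (PiM I_set (\<lambda>i. measure_pmf (P i))) (Pq q') R2 = Pq q'"
    unfolding Pq' R2_def by (rule distr_PiM_map_pmf)
  have m1: "R1 \<in> measurable (Pq q) (PiM I_set (\<lambda>i. measure_pmf (P i)))"
    unfolding Pq_eq R1_def N1[symmetric]
  proof (rule measurable_restrict)
    fix i :: "nat \<times> (int^'d) \<times> nat list" assume "i \<in> I_set"
    then have "f i \<in> I_set" using fI by auto
    then show "(\<lambda>\<omega>. \<omega> (f i)) \<in> measurable (PiM I_set (Mq q)) (Mq q (f i))"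
      by (rule measurable_component_singleton)
  qed
  have m2: "R2 \<in> measurable (PiM I_set (\<lambda>i. measure_pmf (P i))) (Pq q')"
    unfolding Pq_eq R2_def
  proof (rule measurable_restrict)
    fix i :: "nat \<times> (int^'d) \<times> nat list" assume i: "i \<in> I_set"
    have "(\<lambda>\<omega>. \<omega> i) \<in> measurable (PiM I_set (\<lambda>i. measure_pmf (P i))) (count_space UNIV)"
      using measurable_component_singleton[OF i, of "\<lambda>i. measure_pmf (P i)"] by simp
    from measurable_compose[OF this, of tr "count_space UNIV"]
    show "(\<lambda>\<omega>. tr (\<omega> i)) \<in> measurable (PiM I_set (\<lambda>i. measure_pmf (P i))) (Mq q' i)"
      by (simp add: meas_Mq_iff)
  qed
  have \<psi>eq: "\<psi> \<omega> = R2 (R1 \<omega>)" for \<omega>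
    by (auto simp: \<psi>_def R1_def R2_def restrict_def fun_eq_iff)
  have d: "distr (Pq q) (Pq q') \<psi> = Pq q'"
  proof -
    have "distr (Pq q) (Pq q') \<psi> = distr (Pq q) (Pq q') (R2 \<circ> R1)"
      by (rule distr_cong) (auto simp: \<psi>eq)
    also have "\<dots> = distr (distr (Pq q) (PiM I_set (\<lambda>i. measure_pmf (P i))) R1) (Pq q') R2"
      by (rule distr_distr[symmetric, OF m2 m1])
    also have "\<dots> = Pq q'" unfolding d1 d2 ..
    finally show ?thesis .
  qed
  have m\<psi>: "\<psi> \<in> measurable (Pq q) (Pq q')"
  proof -
    have "R2 \<circ> R1 \<in> measurable (Pq q) (Pq q')" by (rule measurable_comp[OF m1 m2])
    moreover have "R2 \<circ> R1 = \<psi>" by (auto simp: \<psi>eq)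
    ultimately show ?thesis by simp
  qed
  have card_eq: "card (Bstar_loc (\<psi> \<omega>) \<theta> T 1 (replicate ((1 - 1) * T + 1) 1)) = card (Bstar_loc \<omega> \<theta> T s (replicate ((s - 1) * T + 1) 1))" for \<omega>
  proof -
    have one: "replicate ((1 - 1) * T + 1) 1 = [1::nat]" by simp
    have g1: "[1::nat] \<in> genea ((1 - 1) * T)" by (simp add: genea_def)
    have hyp: "\<psi> \<omega> (u, x, \<nu>) = (fst (\<omega> (u + a, x + z, lam' @ drop (0 + 1) \<nu>)) - z, snd (\<omega> (u + a, x + z, lam' @ drop (0 + 1) \<nu>)))"
      if "0 \<le> u" "\<nu> \<in> genea u" "take (0 + 1) \<nu> = [1]" for u x \<nu>
      using that by (auto simp: \<psi>_def f_def tr_def I_set_def genea_all split: prod.split)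
    have br: "branch \<omega> (0 + a) (0 + z) lam' T = (\<lambda>(x, \<nu>). (x + z, lam' @ drop (0 + 1) \<nu>)) ` branch (\<psi> \<omega>) 0 0 [1] T"
      by (rule branch_map[of "[1]" 0 lam' a]) (use lam' hyp in \<open>simp_all add: genea_def\<close>)
    define B1 where "B1 = branch (\<psi> \<omega>) 0 0 [1] T"
    have lp: "lattice_pt \<theta> (s * T) = lattice_pt \<theta> T + z"
    proof -
      have "s * T = (s - 1) * T + T" using s by (cases s) auto
      then show ?thesis using lattice_add[OF Tint, of "s - 1"] by (simp add: z_def a_def add.commute)
    qed
    have L: "Bstar_loc (\<psi> \<omega>) \<theta> T 1 (replicate ((1 - 1) * T + 1) 1) = {\<nu>. (lattice_pt \<theta> T, \<nu>) \<in> B1}"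
      unfolding one using Bstar_alt[OF le_refl g1, of "\<psi> \<omega>" \<theta>] by (simp add: B1_def lattice_zero)
    have Rs: "Bstar_loc \<omega> \<theta> T s (replicate ((s - 1) * T + 1) 1) = (\<lambda>\<nu>. lam' @ drop 1 \<nu>) ` {\<nu>. (lattice_pt \<theta> T, \<nu>) \<in> B1}"
    proof -
      have "Bstar_loc \<omega> \<theta> T s (replicate ((s - 1) * T + 1) 1) = {\<nu>. (lattice_pt \<theta> T + z, \<nu>) \<in> branch \<omega> a z lam' T}"
        using Bstar_alt[OF s lam'[unfolded a_def], of \<omega> \<theta>] lp by (simp add: a_def z_def lam'_def)
      also have "\<dots> = {\<nu>. (lattice_pt \<theta> T + z, \<nu>) \<in> (\<lambda>(x, \<nu>). (x + z, lam' @ drop 1 \<nu>)) ` B1}"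
        using br by (simp add: B1_def)
      also have "\<dots> = (\<lambda>\<nu>. lam' @ drop 1 \<nu>) ` {\<nu>. (lattice_pt \<theta> T, \<nu>) \<in> B1}"
        by (auto simp: image_iff) (metis (no_types, lifting) case_prod_conv)
      finally show ?thesis .
    qed
    have "inj_on (\<lambda>\<nu>. lam' @ drop 1 \<nu>) {\<nu>. (lattice_pt \<theta> T, \<nu>) \<in> B1}"
    proof (rule inj_onI)
      fix \<nu> \<nu>' assume h: "\<nu> \<in> {\<nu>. (lattice_pt \<theta> T, \<nu>) \<in> B1}" "\<nu>' \<in> {\<nu>. (lattice_pt \<theta> T, \<nu>) \<in> B1}"
        "lam' @ drop 1 \<nu> = lam' @ drop 1 \<nu>'"
      have "\<nu> \<in> genea (0 + T)" "\<nu>' \<in> genea (0 + T)"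
        using branch_inv[OF g1[simplified], of "(lattice_pt \<theta> T, \<nu>)"] branch_inv[OF g1[simplified], of "(lattice_pt \<theta> T, \<nu>')"] h
        by (auto simp: B1_def)
      then have c: "\<nu> = 1 # drop 1 \<nu>" "\<nu>' = 1 # drop 1 \<nu>'" using genea_cons by blast+
      have "drop 1 \<nu> = drop 1 \<nu>'" using h(3) by simp
      then show "\<nu> = \<nu>'" using c by simp
    qed
    then show ?thesis unfolding L Rs by (simp add: card_image)
  qed
  have pre: "\<psi> -` Ek \<theta> T 1 k \<inter> space (Pq q) = Ek \<theta> T s k"
    unfolding Ek_def space_Pq_CS using card_eq by (auto simp: \<psi>_def space_PiM)
  have Esets: "Ek \<theta> T 1 k \<in> sets (Pq q')"
    using Ek_sets unfolding Pq_eq by (simp add: sets_PiM_cong[of I_set I_set "Mq q'" CS])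
  have "qstar q' \<theta> T 1 k = measure (distr (Pq q) (Pq q') \<psi>) (Ek \<theta> T 1 k)" unfolding qstar_Ek d ..
  also have "\<dots> = measure (Pq q) (Ek \<theta> T s k)" unfolding measure_distr[OF m\<psi> Esets] pre ..
  also have "\<dots> = qstar q \<theta> T s k" by (rule qstar_Ek[symmetric])
  finally have "qstar q' \<theta> T 1 k = qstar q \<theta> T s k" .
  from this[unfolded q'_def a_def z_def] show ?thesis by (rule sym)
qed

lemma part_b_ident:
  fixes \<theta> :: "real^'d" and Q :: "(nat \<times> (int^'d) \<Rightarrow> nat pmf) measure"
  assumes Q: "prob_space Q" "sets Q = sets env_space"
    and Q_indep: "prob_space.indep_vars Q (\<lambda>_. pmf_space) (\<lambda>i q. q i) UNIV"
    and Q_ident: "\<forall>i j. distr Q pmf_space (\<lambda>q. q i) = distr Q pmf_space (\<lambda>q. q j)"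
    and Tint: "\<forall>i. real T * \<theta> $ i \<in> \<int>" and s: "1 \<le> s"
  shows "distr Q (\<Pi>\<^sub>M k\<in>(UNIV::nat set). borel) (\<lambda>q. qstar q \<theta> T s)
       = distr Q (\<Pi>\<^sub>M k\<in>(UNIV::nat set). borel) (\<lambda>q. qstar q \<theta> T 1)"
proof -
  define D where "D = distr Q pmf_space (\<lambda>q. q (0, 0))"
  define QP where "QP = PiM UNIV (\<lambda>_::nat \<times> (int^'d). D)"
  have QQ: "Q = QP" unfolding QP_def D_def by (rule Q_is_prod[OF Q Q_indep Q_ident])
  interpret QI: prob_space Q by (rule Q(1))
  have rv: "(\<lambda>q. q j) \<in> measurable Q pmf_space" for j
    using Q_indep unfolding QI.indep_vars_def2 by (cases j) auto
  have probD: "prob_space D" unfolding D_def by (rule QI.prob_space_distr[OF rv])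
  have sD: "sets D = sets pmf_space" by (simp add: D_def)
  define a where "a = (s - 1) * T"
  define z where "z = lattice_pt \<theta> a"
  define sh where "sh = (\<lambda>tx::nat \<times> (int^'d). (fst tx + a, snd tx + z))"
  define Sh where "Sh q = (\<lambda>n\<in>UNIV. q (sh n))" for q :: "nat \<times> (int^'d) \<Rightarrow> nat pmf"
  have inj: "inj_on sh UNIV" by (auto simp: inj_on_def sh_def prod_eq_iff)
  have dS: "distr QP QP Sh = QP"
    using distr_PiM_reindex[of UNIV "\<lambda>_. D" sh UNIV, OF probD inj] unfolding QP_def Sh_def by simp
  have mSh: "Sh \<in> measurable QP QP"
    unfolding QP_def Sh_def by (rule measurable_restrict) (rule measurable_component_singleton, simp)
  have mP: "(\<lambda>q. qstar q \<theta> T 1) \<in> measurable QP (\<Pi>\<^sub>M k\<in>(UNIV::nat set). borel)"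
  proof (rule qstar_meas)
    fix tx :: "nat \<times> (int^'d)"
    have "(\<lambda>r. r tx) \<in> measurable QP D" unfolding QP_def by (rule measurable_component_singleton) simp
    moreover have "measurable QP D = measurable QP pmf_space" by (rule measurable_cong_sets[OF refl sD])
    ultimately show "(\<lambda>r. r tx) \<in> measurable QP pmf_space" by simp
  qed
  have sq: "qstar q \<theta> T s = qstar (Sh q) \<theta> T 1" for q
  proof
    fix k show "qstar q \<theta> T s k = qstar (Sh q) \<theta> T 1 k"
      using shift_qstar[OF Tint s, of q k] by (simp add: Sh_def sh_def a_def z_def restrict_UNIV)
  qed
  have "distr Q (\<Pi>\<^sub>M k\<in>(UNIV::nat set). borel) (\<lambda>q. qstar q \<theta> T s)
      = distr QP (\<Pi>\<^sub>M k\<in>(UNIV::nat set). borel) ((\<lambda>q. qstar q \<theta> T 1) \<circ> Sh)"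
    unfolding QQ by (rule distr_cong) (auto simp: sq)
  also have "\<dots> = distr (distr QP QP Sh) (\<Pi>\<^sub>M k\<in>(UNIV::nat set). borel) (\<lambda>q. qstar q \<theta> T 1)"
    by (rule distr_distr[symmetric, OF mP mSh])
  also have "\<dots> = distr Q (\<Pi>\<^sub>M k\<in>(UNIV::nat set). borel) (\<lambda>q. qstar q \<theta> T 1)"
    unfolding dS QQ ..
  finally show ?thesis .
qed

theorem lemma4p2p3:
  fixes \<theta> :: "real^'d" and T :: nat
    and Q :: "(nat \<times> (int^'d) \<Rightarrow> nat pmf) measure"
  assumes theta: "\<theta> \<in> Delta" "\<forall>i. \<theta> $ i \<in> \<rat>"
    and T: "T \<in> Nstar_dir \<theta>"
    and Q: "prob_space Q" "sets Q = sets env_space"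
    and Q_indep: "prob_space.indep_vars Q (\<lambda>_. pmf_space) (\<lambda>i q. q i) UNIV"
    and Q_ident: "\<forall>i j. distr Q pmf_space (\<lambda>q. q i) = distr Q pmf_space (\<lambda>q. q j)"
  shows
    "(\<forall>q s. 1 \<le> s \<longrightarrow>
        prob_space.indep_vars (Pq q) (\<lambda>_. count_space UNIV)
          (\<lambda>lam \<omega>. Bstar_loc \<omega> \<theta> T s lam) (genea ((s - 1) * T))
      \<and> (\<forall>lam\<in>genea ((s - 1) * T). \<forall>lam'\<in>genea ((s - 1) * T).
           distr (Pq q) (count_space UNIV) (\<lambda>\<omega>. drop ((s - 1) * T + 1) ` Bstar_loc \<omega> \<theta> T s lam)
         = distr (Pq q) (count_space UNIV) (\<lambda>\<omega>. drop ((s - 1) * T + 1) ` Bstar_loc \<omega> \<theta> T s lam')))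
   \<and> prob_space.indep_vars Q (\<lambda>_. \<Pi>\<^sub>M k\<in>(UNIV::nat set). borel) (\<lambda>s q. qstar q \<theta> T s) {1..}
   \<and> (\<forall>s\<ge>1. \<forall>s'\<ge>1.
        distr Q (\<Pi>\<^sub>M k\<in>(UNIV::nat set). borel) (\<lambda>q. qstar q \<theta> T s)
      = distr Q (\<Pi>\<^sub>M k\<in>(UNIV::nat set). borel) (\<lambda>q. qstar q \<theta> T s'))"
proof -
  have T1: "1 \<le> T" and Tint: "\<forall>i. real T * \<theta> $ i \<in> \<int>" using T by (auto simp: Nstar_dir_def)
  show ?thesis
  proof (intro conjI allI impI ballI)
    fix q :: "nat \<times> (int^'d) \<Rightarrow> nat pmf" and s :: nat assume s: "1 \<le> s"
    show "prob_space.indep_vars (Pq q) (\<lambda>_. count_space UNIV) (\<lambda>lam \<omega>. Bstar_loc \<omega> \<theta> T s lam) (genea ((s - 1) * T))"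
      by (rule part_a_indep[OF s])
    fix lam lam' assume "lam \<in> genea ((s - 1) * T)" "lam' \<in> genea ((s - 1) * T)"
    then show "distr (Pq q) (count_space UNIV) (\<lambda>\<omega>. drop ((s - 1) * T + 1) ` Bstar_loc \<omega> \<theta> T s lam)
         = distr (Pq q) (count_space UNIV) (\<lambda>\<omega>. drop ((s - 1) * T + 1) ` Bstar_loc \<omega> \<theta> T s lam')"
      by (rule part_a_ident[OF s])
  next
    show "prob_space.indep_vars Q (\<lambda>_. \<Pi>\<^sub>M k\<in>(UNIV::nat set). borel) (\<lambda>s q. qstar q \<theta> T s) {1..}"
      by (rule part_b_indep[OF Q(1) Q_indep T1])
  next
    fix s s' :: nat assume "1 \<le> s" "1 \<le> s'"
    then show "distr Q (\<Pi>\<^sub>M k\<in>(UNIV::nat set). borel) (\<lambda>q. qstar q \<theta> T s)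
      = distr Q (\<Pi>\<^sub>M k\<in>(UNIV::nat set). borel) (\<lambda>q. qstar q \<theta> T s')"
      using part_b_ident[OF Q Q_indep Q_ident Tint, of s] part_b_ident[OF Q Q_indep Q_ident Tint, of s'] by simp
  qed
qed

end
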